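(* (a) For every integer $n\ge 2$, $\chi(H_2(n,2))=2^{n-1}$. (b) Let $q\ge 3$ and $n\ge 2$ be integers and let $d$ be an integer with $d>0$ and $d\in\{n-q+2,\ldots,n\}$. Then $\chi(H_q(n,d))=q^{n-d+1}$, and every proper $q^{n-d+1}$-coloring of $H_q(n,d)$ is even.
   Context: $\mathbb{Z}_q=\mathbb{Z}/q\mathbb{Z}$; for $x,y\in\mathbb{Z}_q^n$, $\mathrm{d}(x,y)=|\{i: x_i\neq y_i\}|$ is the Hamming distance. $H_q(n,d)$ is the simple undirected graph with vertex set $\mathbb{Z}_q^n$ in which $x,y$ are adjacent iff $\mathrm{d}(x,y)\ge d$. $\chi$ denotes the chromatic number. A coloring is called even if all its color classes (sets of vertices with the same color) have the same cardinality. *)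

theory Defs
  imports Main
begin

text \<open>Vertices of H_q(n,d): words of length n over Z_q, represented as functions
  nat => nat with values < q on positions < n and 0 elsewhere.\<close>
definition words :: "nat \<Rightarrow> nat \<Rightarrow> (nat \<Rightarrow> nat) set" where
  "words q n = {x. (\<forall>i<n. x i < q) \<and> (\<forall>i\<ge>n. x i = 0)}"

definition hdist :: "nat \<Rightarrow> (nat \<Rightarrow> nat) \<Rightarrow> (nat \<Rightarrow> nat) \<Rightarrow> nat" where
  "hdist n x y = card {i. i < n \<and> x i \<noteq> y i}"

definition H_adj :: "nat \<Rightarrow> nat \<Rightarrow> nat \<Rightarrow> (nat \<Rightarrow> nat) \<Rightarrow> (nat \<Rightarrow> nat) \<Rightarrow> bool" where
  "H_adj q n d x y \<longleftrightarrow> x \<in> words q n \<and> y \<in> words q n \<and> x \<noteq> y \<and> hdist n x y \<ge> d"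

definition proper_coloring :: "'a set \<Rightarrow> ('a \<Rightarrow> 'a \<Rightarrow> bool) \<Rightarrow> nat \<Rightarrow> ('a \<Rightarrow> nat) \<Rightarrow> bool" where
  "proper_coloring V adj k c \<longleftrightarrow>
     (\<forall>v\<in>V. c v < k) \<and> (\<forall>u\<in>V. \<forall>v\<in>V. adj u v \<longrightarrow> c u \<noteq> c v)"

definition chromatic_number :: "'a set \<Rightarrow> ('a \<Rightarrow> 'a \<Rightarrow> bool) \<Rightarrow> nat" where
  "chromatic_number V adj = (LEAST k. \<exists>c. proper_coloring V adj k c)"

definition even_coloring :: "'a set \<Rightarrow> ('a \<Rightarrow> nat) \<Rightarrow> bool" where
  "even_coloring V c \<longleftrightarrow>
     (\<forall>u\<in>V. \<forall>v\<in>V. card {w\<in>V. c w = c u} = card {w\<in>V. c w = c v})"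

end

theory Submission
  imports Defs "HOL-Computational_Algebra.Polynomial"
begin


lemma coeff_X_pow_mult: "i < a \<Longrightarrow> coeff ([:0, c:]^a * p) i = 0"
proof (induction a arbitrary: i)
  case 0 then show ?case by simp
next
  case (Suc a)
  have "[:0, c:]^Suc a * p = pCons 0 (smult c ([:0, c:]^a * p))"
    by (simp add: mult.assoc)
  then show ?case using Suc by (cases i) auto
qed

definition agr :: "nat \<Rightarrow> (nat \<Rightarrow> nat) \<Rightarrow> (nat \<Rightarrow> nat) \<Rightarrow> nat" where
  "agr n x y = card {i. i < n \<and> x i = y i}"

lemma agr_le: "agr n x y \<le> n"
proof -
  have "{i. i < n \<and> x i = y i} \<subseteq> {..<n}" by auto
  then show ?thesis unfolding agr_def by (metis card_lessThan card_mono finite_lessThan)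
qed

lemma words_upd:
  assumes "y \<in> words q n" "a < q" shows "y(n := a) \<in> words q (Suc n)"
  using assms by (auto simp: words_def)

lemma words_Suc_image:
  "words q (Suc n) = (\<lambda>(y, a). y(n := a)) ` (words q n \<times> {..<q})"
proof
  show "words q (Suc n) \<subseteq> (\<lambda>(y, a). y(n := a)) ` (words q n \<times> {..<q})"
  proof
    fix x assume x: "x \<in> words q (Suc n)"
    have "x(n := 0) \<in> words q n" using x by (auto simp: words_def)
    moreover have "x n < q" using x by (auto simp: words_def)
    moreover have "x = (x(n := 0))(n := x n)" by auto
    ultimately show "x \<in> (\<lambda>(y, a). y(n := a)) ` (words q n \<times> {..<q})"
      by (intro rev_image_eqI[of "(x(n := 0), x n)"]) auto
  qed
qed (auto simp: words_upd)

lemma words_Suc_inj: "inj_on (\<lambda>(y, a). y(n := a)) (words q n \<times> {..<q})"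
proof (rule inj_onI, clarify)
  fix y a y' a' assume y: "y \<in> words q n" and y': "y' \<in> words q n"
    and eq: "y(n := a) = y'(n := a')"
  have "a = a'" using fun_cong[OF eq, of n] by simp
  moreover have "y = y'"
  proof
    fix i show "y i = y' i"
    proof (cases "i = n")
      case True then show ?thesis using y y' by (auto simp: words_def)
    next
      case False then show ?thesis using fun_cong[OF eq, of i] by simp
    qed
  qed
  ultimately show "y = y' \<and> a = a'" by simp
qed

lemma finite_words: "finite (words q n)"
proof (induction n)
  case 0
  have "words q 0 = {\<lambda>_. 0}" by (auto simp: words_def)
  then show ?case by simp
next
  case (Suc n) then show ?case by (simp add: words_Suc_image)
qed

lemma card_words: "card (words q n) = q ^ n"
proof (induction n)
  case 0
  have "words q 0 = {\<lambda>_. 0}" by (auto simp: words_def)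
  then show ?case by simp
next
  case (Suc n)
  have "card (words q (Suc n)) = card (words q n \<times> {..<q})"
    unfolding words_Suc_image by (rule card_image[OF words_Suc_inj])
  then show ?case using Suc by (simp add: card_cartesian_product)
qed

lemma sum_words_Suc:
  "(\<Sum>x\<in>words q (Suc n). g x) = (\<Sum>a<q. \<Sum>y\<in>words q n. g (y(n := a)))"
proof -
  have "(\<Sum>x\<in>words q (Suc n). g x) = (\<Sum>p\<in>words q n \<times> {..<q}. g ((\<lambda>(y, a). y(n := a)) p))"
    unfolding words_Suc_image by (subst sum.reindex[OF words_Suc_inj]) (auto intro: sum.cong split: prod.splits)
  also have "\<dots> = (\<Sum>y\<in>words q n. \<Sum>a<q. g (y(n := a)))"
    by (simp add: sum.cartesian_product prod.case_distrib)
  also have "\<dots> = (\<Sum>a<q. \<Sum>y\<in>words q n. g (y(n := a)))"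
    by (rule sum.swap)
  finally show ?thesis .
qed

lemma agr_upd:
  assumes "y \<in> words q n" "y' \<in> words q n"
  shows "agr (Suc n) (y(n := a)) (y'(n := b)) = agr n y y' + (if a = b then 1 else 0)"
proof -
  have "{i. i < Suc n \<and> (y(n := a)) i = (y'(n := b)) i} =
        {i. i < n \<and> y i = y' i} \<union> (if a = b then {n} else {})"
    by (auto simp: less_Suc_eq)
  moreover have "finite {i. i < n \<and> y i = y' i}" by simp
  ultimately show ?thesis unfolding agr_def by auto
qed

lemma agr_eq_n:
  assumes "x \<in> words q n" "y \<in> words q n"
  shows "agr n x y = n \<longleftrightarrow> x = y"
proof
  assume h: "agr n x y = n"
  have sub: "{i. i < n \<and> x i = y i} \<subseteq> {..<n}" by auto
  have "{i. i < n \<and> x i = y i} = {..<n}"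
    using card_subset_eq[OF finite_lessThan sub] h by (simp add: agr_def)
  then have "\<forall>i<n. x i = y i" by auto
  then show "x = y" using assms by (auto simp: words_def intro!: ext) (metis not_le)
next
  assume "x = y" then show "agr n x y = n" by (simp add: agr_def)
qed

definition KP :: "nat \<Rightarrow> nat \<Rightarrow> (nat \<Rightarrow> nat) \<Rightarrow> (nat \<Rightarrow> nat) \<Rightarrow> real poly" where
  "KP q n x y = [:0, real q - 1:] ^ agr n x y * [:real q, -1:] ^ (n - agr n x y)"

definition BQ :: "nat \<Rightarrow> nat \<Rightarrow> ((nat \<Rightarrow> nat) \<Rightarrow> (nat \<Rightarrow> nat) \<Rightarrow> real) \<Rightarrow> real poly" where
  "BQ q n c = (\<Sum>x\<in>words q n. \<Sum>y\<in>words q n. smult (c x y) (KP q n x y))"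

definition BP :: "nat \<Rightarrow> nat \<Rightarrow> ((nat \<Rightarrow> nat) \<Rightarrow> real) \<Rightarrow> ((nat \<Rightarrow> nat) \<Rightarrow> real) \<Rightarrow> real poly" where
  "BP q n f g = BQ q n (\<lambda>x y. f x * g y)"

lemma BQ_sum: "(\<Sum>a\<in>A. BQ q n (c a)) = BQ q n (\<lambda>x y. \<Sum>a\<in>A. c a x y)"
  unfolding BQ_def smult_sum
  by (simp add: sum.swap[of _ A])

lemma BQ_add: "BQ q n (\<lambda>x y. c x y + d x y) = BQ q n c + BQ q n d"
  unfolding BQ_def by (simp add: smult_add_left sum.distrib)

lemma smult_sum_right: "smult k (\<Sum>x\<in>A. f x) = (\<Sum>x\<in>A. smult k (f x))"
  by (induction A rule: infinite_finite_induct) (auto simp: smult_add_right)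

lemma BQ_smult: "BQ q n (\<lambda>x y. k * c x y) = smult k (BQ q n c)"
  unfolding BQ_def by (simp add: smult_sum_right)

lemma KP_upd:
  assumes "y \<in> words q n" "y' \<in> words q n"
  shows "KP q (Suc n) (y(n := a)) (y'(n := b)) =
         KP q n y y' * (if a = b then [:0, real q - 1:] else [:real q, -1:])"
proof -
  have le: "agr n y y' \<le> n" by (rule agr_le)
  show ?thesis
  proof (cases "a = b")
    case True
    then show ?thesis using agr_upd[OF assms, of a b] by (simp add: KP_def mult_ac)
  next
    case False
    then have "Suc n - agr (Suc n) (y(n := a)) (y'(n := b)) = Suc (n - agr n y y')"
      using agr_upd[OF assms, of a b] le by simp
    moreover have "agr (Suc n) (y(n := a)) (y'(n := b)) = agr n y y'"
      using agr_upd[OF assms, of a b] False by simp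
    ultimately show ?thesis using False unfolding KP_def
      by (simp only: power_Suc mult_ac if_False)
  qed
qed

lemma BQ_Suc:
  "BQ q (Suc n) c = (\<Sum>a<q. \<Sum>b<q. BQ q n (\<lambda>u v. c (u(n := a)) (v(n := b))) *
      (if a = b then [:0, real q - 1:] else [:real q, -1:]))"
proof -
  have "BQ q (Suc n) c = (\<Sum>a<q. \<Sum>u\<in>words q n. \<Sum>b<q. \<Sum>v\<in>words q n.
      smult (c (u(n := a)) (v(n := b))) (KP q (Suc n) (u(n := a)) (v(n := b))))"
    unfolding BQ_def by (simp add: sum_words_Suc)
  also have "\<dots> = (\<Sum>a<q. \<Sum>u\<in>words q n. \<Sum>b<q. \<Sum>v\<in>words q n.
      smult (c (u(n := a)) (v(n := b))) (KP q n u v) *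
      (if a = b then [:0, real q - 1:] else [:real q, -1:]))"
    by (intro sum.cong refl) (simp add: KP_upd)
  also have "\<dots> = (\<Sum>a<q. \<Sum>b<q. \<Sum>u\<in>words q n. \<Sum>v\<in>words q n.
      smult (c (u(n := a)) (v(n := b))) (KP q n u v) *
      (if a = b then [:0, real q - 1:] else [:real q, -1:]))"
    by (intro sum.cong refl) (rule sum.swap)
  also have "\<dots> = (\<Sum>a<q. \<Sum>b<q. BQ q n (\<lambda>u v. c (u(n := a)) (v(n := b))) *
      (if a = b then [:0, real q - 1:] else [:real q, -1:]))"
    unfolding BQ_def by (simp add: sum_distrib_right)
  finally show ?thesis .
qed

lemma sum_if_c:
  fixes X :: "nat \<Rightarrow> nat \<Rightarrow> real poly"
  shows "(\<Sum>a<q. \<Sum>b<q. X a b * (if a = b then [:0, real q - 1:] else [:real q, -1:])) =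
    (\<Sum>a<q. \<Sum>b<q. X a b) * [:real q, -1:] + (\<Sum>a<q. X a a) * [:- real q, real q:]"
proof -
  have c0: "[:0, real q - 1:] = [:real q, -1:] + [:- real q, real q:]" by simp
  have c: "\<And>a b. X a b * (if a = b then [:0, real q - 1:] else [:real q, -1:]) =
      X a b * [:real q, -1:] + (if a = b then X a b * [:- real q, real q:] else 0)"
    by (simp only: c0 distrib_left split: if_split) simp
  have "(\<Sum>a<q. \<Sum>b<q. X a b * (if a = b then [:0, real q - 1:] else [:real q, -1:])) =
    (\<Sum>a<q. (\<Sum>b<q. X a b * [:real q, -1:]) + (\<Sum>b<q. if a = b then X a b * [:- real q, real q:] else 0))"
    by (simp only: c sum.distrib)
  also have "\<dots> = (\<Sum>a<q. (\<Sum>b<q. X a b) * [:real q, -1:] + X a a * [:- real q, real q:])"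
    by (intro sum.cong refl) (simp only: sum_distrib_right sum.delta finite_lessThan lessThan_iff, simp)
  also have "\<dots> = (\<Sum>a<q. \<Sum>b<q. X a b) * [:real q, -1:] + (\<Sum>a<q. X a a) * [:- real q, real q:]"
    by (simp only: sum.distrib sum_distrib_right)
  finally show ?thesis .
qed

lemma pointwise_decomp:
  fixes fa :: "nat \<Rightarrow> real" and fb :: "nat \<Rightarrow> real"
  assumes "q > 0"
  shows "(\<Sum>a<q. fa a * fb a) = (1 / real q) * ((\<Sum>a<q. fa a) * (\<Sum>a<q. fb a)) +
    (\<Sum>a<q. (fa a - (\<Sum>c<q. fa c) / real q) * (fb a - (\<Sum>c<q. fb c) / real q))"
proof -
  define G where "G = (\<Sum>c<q. fa c)"
  define H where "H = (\<Sum>c<q. fb c)"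
  have "(\<Sum>a<q. (fa a - G / real q) * (fb a - H / real q)) =
     (\<Sum>a<q. fa a * fb a) - (\<Sum>a<q. fa a) * H / real q - G * (\<Sum>a<q. fb a) / real q
       + real q * (G * H / (real q * real q))"
    by (simp add: algebra_simps sum.distrib sum_subtractf sum_distrib_left sum_distrib_right sum_divide_distrib)
  also have "\<dots> = (\<Sum>a<q. fa a * fb a) - G * H / real q"
    using assms by (simp add: G_def H_def field_simps)
  finally show ?thesis using assms by (simp add: G_def[symmetric] H_def[symmetric] field_simps)
qed

lemma decomp:
  assumes q: "q \<ge> 1"
  shows "\<exists>D. (\<forall>k. 0 \<le> D k) \<and> BP q n f f = (\<Sum>k\<le>n. smult (D k) ([:- real q, real q:] ^ k))"
proof (induction n arbitrary: f)
  case 0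
  have w: "words q 0 = {\<lambda>_. 0}" by (auto simp: words_def)
  have "BP q 0 f f = smult (f (\<lambda>_. 0) * f (\<lambda>_. 0)) 1"
    unfolding BP_def BQ_def w by (simp add: KP_def agr_def)
  then show ?case by (intro exI[of _ "\<lambda>_. f (\<lambda>_. 0) * f (\<lambda>_. 0)"]) auto
next
  case (Suc n)
  define fa where "fa a = (\<lambda>y. f (y(n := a)))" for a
  define g where "g = (\<lambda>y. \<Sum>a<q. fa a y)"
  define h where "h a = (\<lambda>y. fa a y - g y / real q)" for a
  let ?B = "[:- real q, real q:]"
  have qpos: "q > 0" using q by simp
  have e1: "BP q (Suc n) f f = (\<Sum>a<q. \<Sum>b<q. BQ q n (\<lambda>u v. fa a u * fa b v)) * [:real q, -1:]
      + (\<Sum>a<q. BQ q n (\<lambda>u v. fa a u * fa a v)) * ?B"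
    unfolding BP_def BQ_Suc fa_def by (rule sum_if_c)
  have e2: "(\<Sum>a<q. \<Sum>b<q. BQ q n (\<lambda>u v. fa a u * fa b v)) = BP q n g g"
    unfolding BP_def g_def by (simp add: BQ_sum sum_product)
  have e3: "(\<Sum>a<q. BQ q n (\<lambda>u v. fa a u * fa a v)) =
      smult (1 / real q) (BP q n g g) + (\<Sum>a<q. BP q n (h a) (h a))"
  proof -
    have "(\<Sum>a<q. BQ q n (\<lambda>u v. fa a u * fa a v)) = BQ q n (\<lambda>u v. \<Sum>a<q. fa a u * fa a v)"
      by (simp add: BQ_sum)
    also have "\<dots> = BQ q n (\<lambda>u v. (1 / real q) * (g u * g v) + (\<Sum>a<q. h a u * h a v))"
    proof -
      have pw: "\<And>u v. (\<Sum>a<q. fa a u * fa a v) = (1 / real q) * (g u * g v) + (\<Sum>a<q. h a u * h a v)"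
        unfolding g_def h_def by (rule pointwise_decomp[OF qpos])
      show ?thesis by (simp only: pw)
    qed
    also have "\<dots> = smult (1 / real q) (BP q n g g) + (\<Sum>a<q. BP q n (h a) (h a))"
      by (simp only: BQ_add BQ_smult BQ_sum BP_def)
    finally show ?thesis .
  qed
  have pe: "[:real q, -1:] + smult (1 / real q) ?B = [:real q - 1:]" using qpos by simp
  have main: "BP q (Suc n) f f = smult (real q - 1) (BP q n g g) + (\<Sum>a<q. BP q n (h a) (h a)) * ?B"
  proof -
    have "BP q (Suc n) f f = BP q n g g * ([:real q, -1:] + smult (1 / real q) ?B)
        + (\<Sum>a<q. BP q n (h a) (h a)) * ?B"
      unfolding e1 e2 e3
      by (simp only: distrib_left distrib_right mult_smult_left mult_smult_right add.assoc)
    also have "\<dots> = smult (real q - 1) (BP q n g g) + (\<Sum>a<q. BP q n (h a) (h a)) * ?B"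
      unfolding pe by (simp add: mult.commute)
    finally show ?thesis .
  qed
  obtain Dg where Dg: "\<forall>k. 0 \<le> Dg k" "BP q n g g = (\<Sum>k\<le>n. smult (Dg k) (?B ^ k))"
    using Suc.IH by blast
  have "\<forall>a. \<exists>D. (\<forall>k. 0 \<le> D k) \<and> BP q n (h a) (h a) = (\<Sum>k\<le>n. smult (D k) (?B ^ k))"
    using Suc.IH by blast
  then obtain Dh where Dh: "\<And>a k. 0 \<le> Dh a k"
    "\<And>a. BP q n (h a) (h a) = (\<Sum>k\<le>n. smult (Dh a k) (?B ^ k))"
    by metis
  define D' where "D' k = (if k \<le> n then (real q - 1) * Dg k else 0) +
      (if k = 0 then 0 else (\<Sum>a<q. Dh a (k - 1)))" for k
  have D'pos: "\<forall>k. 0 \<le> D' k"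
    using Dg(1) Dh(1) q by (auto simp: D'_def intro!: add_nonneg_nonneg sum_nonneg)
  have s1: "(\<Sum>k\<le>Suc n. smult (if k \<le> n then (real q - 1) * Dg k else 0) (?B ^ k)) =
      smult (real q - 1) (\<Sum>k\<le>n. smult (Dg k) (?B ^ k))"
    by (simp add: smult_sum_right)
  have s2: "(\<Sum>k\<le>Suc n. smult (if k = 0 then 0 else (\<Sum>a<q. Dh a (k - 1))) (?B ^ k)) =
      (\<Sum>a<q. \<Sum>k\<le>n. smult (Dh a k) (?B ^ k)) * ?B"
  proof -
    have "(\<Sum>k\<le>Suc n. smult (if k = 0 then 0 else (\<Sum>a<q. Dh a (k - 1))) (?B ^ k)) =
        (\<Sum>k\<le>n. smult (\<Sum>a<q. Dh a k) (?B ^ Suc k))"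
      by (subst sum.atMost_Suc_shift) simp
    also have "\<dots> = (\<Sum>k\<le>n. \<Sum>a<q. smult (Dh a k) (?B ^ k) * ?B)"
      by (simp only: smult_sum power_Suc2 mult_smult_left[symmetric] sum_distrib_right)
    also have "\<dots> = (\<Sum>a<q. \<Sum>k\<le>n. smult (Dh a k) (?B ^ k)) * ?B"
      by (simp only: sum_distrib_right, rule sum.swap)
    finally show ?thesis .
  qed
  have "(\<Sum>k\<le>Suc n. smult (D' k) (?B ^ k)) = smult (real q - 1) (BP q n g g) + (\<Sum>a<q. BP q n (h a) (h a)) * ?B"
    unfolding D'_def smult_add_left sum.distrib s1 s2 Dg(2) Dh(2) by simp
  then show ?case using main D'pos by metis
qed

definition Aa :: "nat \<Rightarrow> nat \<Rightarrow> real" where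
  "Aa t k = (\<Sum>i<t. (-1) ^ i * real (k choose i))"
definition Bb :: "real \<Rightarrow> nat \<Rightarrow> nat \<Rightarrow> real" where
  "Bb Q t k = (\<Sum>i<t. (- Q) ^ i * real (k choose i))"
definition pp :: "real \<Rightarrow> nat \<Rightarrow> nat \<Rightarrow> real" where
  "pp Q t k = (\<Sum>i<t. (Q ^ t * (-1) ^ i - (- Q) ^ i) * real (k choose i))"
definition Fv :: "real \<Rightarrow> nat \<Rightarrow> nat \<Rightarrow> real" where
  "Fv Q t k = (Q - 1) ^ k + (-1) ^ k * pp Q t k"

lemma pp_eq: "pp Q t k = Q ^ t * Aa t k - Bb Q t k"
  unfolding pp_def Aa_def Bb_def
  by (simp add: algebra_simps sum_subtractf sum_distrib_left)

lemma Aa_Suc: "Aa (Suc s) (Suc k) = (-1) ^ s * real (k choose s)"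
proof (induction s)
  case 0 then show ?case by (simp add: Aa_def)
next
  case (Suc s)
  have "Aa (Suc (Suc s)) (Suc k) = Aa (Suc s) (Suc k) + (-1) ^ Suc s * real (Suc k choose Suc s)"
    by (simp add: Aa_def)
  also have "\<dots> = (-1) ^ Suc s * real (k choose Suc s)"
    using Suc by (simp add: algebra_simps)
  finally show ?case .
qed

lemma Bb_Suc: "Bb Q (Suc s) (Suc k) + (Q - 1) * Bb Q (Suc s) k = - ((- Q) ^ Suc s * real (k choose s))"
proof (induction s)
  case 0 then show ?case by (simp add: Bb_def)
next
  case (Suc s)
  have e1: "Bb Q (Suc (Suc s)) (Suc k) = Bb Q (Suc s) (Suc k) + (- Q) ^ Suc s * real (Suc k choose Suc s)"
    by (simp add: Bb_def)
  have e2: "Bb Q (Suc (Suc s)) k = Bb Q (Suc s) k + (- Q) ^ Suc s * real (k choose Suc s)"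
    by (simp add: Bb_def)
  show ?case unfolding e1 e2 using Suc
    by (simp add: algebra_simps)
qed

lemma lin_id: "c * a1 - b1 + r * (c * a0 - b0) = c * a1 + c * r * a0 - (b1 + r * (b0::real))"
  by (simp add: algebra_simps)

lemma pp_rec: "pp Q (Suc s) (Suc k) + (Q - 1) * pp Q (Suc s) k = Q ^ Suc s * (Q - 1) * Aa (Suc s) k"
proof -
  define X where "X = (-1) ^ s * real (k choose s)"
  have a: "Aa (Suc s) (Suc k) = X" unfolding X_def by (rule Aa_Suc)
  have m: "(- Q) ^ Suc s * real (k choose s) = - (Q ^ Suc s * X)"
    unfolding X_def power_minus[of Q] power_Suc[of "-1::real"] by simp
  have b: "Bb Q (Suc s) (Suc k) + (Q - 1) * Bb Q (Suc s) k = Q ^ Suc s * X"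
    using Bb_Suc[of Q s k] unfolding m by simp
  have "pp Q (Suc s) (Suc k) + (Q - 1) * pp Q (Suc s) k =
      Q ^ Suc s * Aa (Suc s) (Suc k) + Q ^ Suc s * (Q - 1) * Aa (Suc s) k
      - (Bb Q (Suc s) (Suc k) + (Q - 1) * Bb Q (Suc s) k)"
    unfolding pp_eq by (rule lin_id)
  then show ?thesis unfolding a b by simp
qed

lemma Fv_rec: "Fv Q (Suc s) (Suc k) = (Q - 1) * Fv Q (Suc s) k - (-1) ^ k * Q ^ Suc s * (Q - 1) * Aa (Suc s) k"
proof -
  have h: "pp Q (Suc s) (Suc k) = Q ^ Suc s * (Q - 1) * Aa (Suc s) k - (Q - 1) * pp Q (Suc s) k"
    using pp_rec[of Q s k] by simp
  show ?thesis unfolding Fv_def h by (simp add: algebra_simps)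
qed

lemma Aa_0: "Aa (Suc s) 0 = 1"
  unfolding Aa_def by (induction s) auto

lemma Fv_0: "Fv Q (Suc s) 0 = Q ^ Suc s"
proof -
  have "Bb Q (Suc s) 0 = 1" unfolding Bb_def by (induction s) auto
  then show ?thesis unfolding Fv_def pp_eq Aa_0 by simp
qed

lemma Fv_1: "Fv Q (Suc s) (Suc 0) = 0"
  using Fv_rec[of Q s 0] by (simp add: Fv_0 Aa_0)

lemma binom_ratio:
  assumes "s \<le> j"
  shows "real (Suc j choose s) \<le> (real s + 1) * real (j choose s)"
proof -
  have id: "(Suc j - s) * (Suc j choose s) = Suc j * (j choose s)"
    using binomial_absorb_comp[of "Suc j" s] by simp
  have pos: "real (Suc j - s) > 0" using assms by simp
  have le: "real (Suc j) \<le> (real s + 1) * real (Suc j - s)"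
  proof -
    have "real (Suc j - s) = real j + 1 - real s" using assms by (simp add: of_nat_diff)
    moreover have "real s * (real j - real s) \<ge> 0" using assms by simp
    ultimately show ?thesis by (simp add: algebra_simps)
  qed
  have "real (Suc j - s) * real (Suc j choose s) = real (Suc j) * real (j choose s)"
    using arg_cong[OF id, of real] by (simp only: of_nat_mult)
  also have "\<dots> \<le> (real s + 1) * real (Suc j - s) * real (j choose s)"
    by (rule mult_right_mono[OF le]) simp
  finally have "real (Suc j - s) * real (Suc j choose s) \<le> real (Suc j - s) * ((real s + 1) * real (j choose s))"
    by (simp add: algebra_simps)
  then show ?thesis using pos by (simp add: mult_le_cancel_left)
qed

lemma Fv_inv:
  assumes Q: "Q - 1 \<ge> real (Suc s)"
  shows "Fv Q (Suc s) (Suc j) \<ge> 0 \<and> (odd (j + s) \<longrightarrow> Fv Q (Suc s) (Suc j) \<ge> Q ^ Suc s * real (j choose s))"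
proof (induction j)
  case 0
  then show ?case by (cases s) (simp_all add: Fv_1)
next
  case (Suc j)
  let ?r = "Q - 1"
  have r0: "?r \<ge> 0" using Q by simp
  have Q0: "Q \<ge> 0" using Q by simp
  have rec: "Fv Q (Suc s) (Suc (Suc j)) = ?r * Fv Q (Suc s) (Suc j) + (-1) ^ (j + s) * Q ^ Suc s * ?r * real (j choose s)"
    using Fv_rec[of Q s "Suc j"] Aa_Suc[of s j] by (simp add: power_add algebra_simps)
  show ?case
  proof (cases "even (j + s)")
    case True
    then have rec': "Fv Q (Suc s) (Suc (Suc j)) = ?r * Fv Q (Suc s) (Suc j) + Q ^ Suc s * ?r * real (j choose s)"
      using rec by simp
    have A: "Fv Q (Suc s) (Suc (Suc j)) \<ge> Q ^ Suc s * ?r * real (j choose s)"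
      unfolding rec' using Suc r0 by simp
    have B: "?r * real (j choose s) \<ge> real (Suc j choose s)"
    proof (cases "s \<le> j")
      case True
      have "real (Suc j choose s) \<le> (real s + 1) * real (j choose s)" by (rule binom_ratio[OF True])
      also have "\<dots> \<le> ?r * real (j choose s)" using Q by (intro mult_right_mono) auto
      finally show ?thesis .
    next
      case False
      then have "Suc j < s \<or> Suc j = s" by auto
      then show ?thesis
      proof
        assume "Suc j < s" then show ?thesis using r0 by (simp add: binomial_eq_0)
      next
        assume "Suc j = s" then have "j + s = 2 * j + 1" by simp
        with \<open>even (j + s)\<close> have False by simp
        then show ?thesis ..
      qed
    qed
    have C: "Q ^ Suc s * ?r * real (j choose s) \<ge> Q ^ Suc s * real (Suc j choose s)"
      using mult_left_mono[OF B, of "Q ^ Suc s"] Q0 by (simp add: mult.assoc)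
    have nn: "Q ^ Suc s * ?r * real (j choose s) \<ge> 0" using Q0 r0 by simp
    show ?thesis using A C nn by (intro conjI impI; linarith)
  next
    case False
    then have rec': "Fv Q (Suc s) (Suc (Suc j)) = ?r * (Fv Q (Suc s) (Suc j) - Q ^ Suc s * real (j choose s))"
      using rec by (simp add: algebra_simps)
    have "Fv Q (Suc s) (Suc j) - Q ^ Suc s * real (j choose s) \<ge> 0" using Suc False by simp
    then show ?thesis unfolding rec' using r0 False by simp
  qed
qed

lemma Fv_nonneg:
  assumes "Q - 1 \<ge> real t" "t \<ge> 1"
  shows "Fv Q t k \<ge> 0"
proof -
  obtain s where t: "t = Suc s" using assms by (cases t) auto
  show ?thesis
  proof (cases k)
    case 0 then show ?thesis using assms t by (simp add: Fv_0)
  next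
    case (Suc j) then show ?thesis using Fv_inv[of s Q j] assms t by simp
  qed
qed


lemma BP_indicator:
  assumes F: "F \<subseteq> words q n"
  shows "BP q n (\<lambda>x. if x \<in> F then 1 else 0) (\<lambda>x. if x \<in> F then 1 else 0) =
         (\<Sum>x\<in>F. \<Sum>y\<in>F. KP q n x y)"
proof -
  have fin: "finite (words q n)" by (rule finite_words)
  have W: "words q n \<inter> F = F" using F by auto
  have "BP q n (\<lambda>x. if x \<in> F then 1 else 0) (\<lambda>x. if x \<in> F then 1 else 0) =
      (\<Sum>x\<in>words q n. if x \<in> F then (\<Sum>y\<in>words q n. if y \<in> F then KP q n x y else 0) else 0)"
    unfolding BP_def BQ_def by (intro sum.cong refl) (auto intro!: sum.cong)
  also have "\<dots> = (\<Sum>x\<in>F. \<Sum>y\<in>F. KP q n x y)"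
    by (simp add: sum.inter_restrict[OF fin, symmetric] W)
  finally show ?thesis .
qed

lemma poly_KP_1:
  "poly (KP q n x y) 1 = (real q - 1) ^ n"
  using agr_le[of n x y] by (simp add: KP_def power_add[symmetric])

lemma poly_KP_q:
  assumes "x \<in> words q n" "y \<in> words q n"
  shows "poly (KP q n x y) (real q) = (if x = y then (real q * (real q - 1)) ^ n else 0)"
proof (cases "x = y")
  case True
  then have "agr n x y = n" using agr_eq_n[OF assms] by simp
  then show ?thesis using True by (simp add: KP_def mult.commute)
next
  case False
  then have "agr n x y < n" using agr_eq_n[OF assms] agr_le[of n x y] by simp
  then show ?thesis using False by (simp add: KP_def)
qed

lemma coeff_Bpow:
  "coeff ([:- real q, real q:] ^ k) i = real (k choose i) * real q ^ i * (- real q) ^ (k - i)"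
proof (cases "i \<le> k")
  case True then show ?thesis by (simp add: coeff_linear_poly_power)
next
  case False
  have "degree ([:- real q, real q:] ^ k) \<le> k"
    by (rule order_trans[OF degree_power_le]) simp
  then have "coeff ([:- real q, real q:] ^ k) i = 0" using False by (intro coeff_eq_0) simp
  then show ?thesis using False by (simp add: binomial_eq_0)
qed

lemma sum_zero_pow: "(\<Sum>k\<le>n. (D k :: real) * 0 ^ k) = D 0"
  by (induction n) auto

theorem ekr:
  assumes qt: "q \<ge> t + 1" and t: "t \<ge> 1" and F: "F \<subseteq> words q n"
    and inter: "\<forall>x\<in>F. \<forall>y\<in>F. agr n x y \<ge> t"
  shows "card F * q ^ t \<le> q ^ n"
proof -
  define f where "f = (\<lambda>x. if x \<in> F then 1 else (0::real))"
  define Q where "Q = real q"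
  let ?B = "[:- real q, real q:]"
  have q1: "q \<ge> 1" using qt by simp
  have finF: "finite F" using F finite_words finite_subset by blast
  obtain D where D: "\<forall>k. 0 \<le> D k" "BP q n f f = (\<Sum>k\<le>n. smult (D k) (?B ^ k))"
    using decomp[OF q1] by blast
  have P: "BP q n f f = (\<Sum>x\<in>F. \<Sum>y\<in>F. KP q n x y)"
    unfolding f_def by (rule BP_indicator[OF F])
  define N where "N = real (card F)"
  have r0: "Q - 1 > 0" using qt t by (simp add: Q_def)
  have "poly (BP q n f f) 1 = (Q - 1) ^ n * N ^ 2"
    unfolding P by (simp add: poly_sum poly_KP_1 Q_def N_def power2_eq_square)
  moreover have "poly (BP q n f f) 1 = D 0"
    unfolding D(2) by (simp add: poly_sum sum_zero_pow)
  ultimately have D0: "D 0 = (Q - 1) ^ n * N ^ 2" by simp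
  have "poly (BP q n f f) Q = (Q * (Q - 1)) ^ n * N"
  proof -
    have "poly (BP q n f f) Q = (\<Sum>x\<in>F. \<Sum>y\<in>F. if x = y then (Q * (Q - 1)) ^ n else 0)"
      unfolding P poly_sum Q_def using F by (intro sum.cong refl) (auto simp: poly_KP_q[OF subsetD[OF F] subsetD[OF F]])
    also have "\<dots> = (Q * (Q - 1)) ^ n * N"
      using finF by (simp add: N_def)
    finally show ?thesis .
  qed
  moreover have "poly (BP q n f f) Q = (\<Sum>k\<le>n. D k * (Q * (Q - 1)) ^ k)"
    unfolding D(2) by (simp add: poly_sum Q_def algebra_simps)
  ultimately have DQ: "(\<Sum>k\<le>n. D k * (Q * (Q - 1)) ^ k) = (Q * (Q - 1)) ^ n * N" by simp
  have Z: "(\<Sum>k\<le>n. D k * Q ^ k * (-1) ^ k * real (k choose i)) = 0" if i: "i < t" for i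
  proof -
    have "coeff (BP q n f f) i = 0"
      unfolding P coeff_sum
    proof (intro sum.neutral ballI)
      fix x y assume "x \<in> F" "y \<in> F"
      then have "i < agr n x y" using inter i by (meson less_le_trans)
      then show "coeff (KP q n x y) i = 0" unfolding KP_def by (rule coeff_X_pow_mult)
    qed
    then have z: "(\<Sum>k\<le>n. D k * (real (k choose i) * Q ^ i * (- Q) ^ (k - i))) = 0"
      unfolding D(2) coeff_sum by (simp add: coeff_Bpow Q_def)
    have "(\<Sum>k\<le>n. D k * Q ^ k * (-1) ^ k * real (k choose i)) =
        (-1) ^ i * (\<Sum>k\<le>n. D k * (real (k choose i) * Q ^ i * (- Q) ^ (k - i)))"
      unfolding sum_distrib_left
    proof (intro sum.cong refl)
      fix k assume "k \<in> {..n}"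
      show "D k * Q ^ k * (-1) ^ k * real (k choose i) =
          (-1) ^ i * (D k * (real (k choose i) * Q ^ i * (- Q) ^ (k - i)))"
      proof (cases "i \<le> k")
        case True
        then obtain m where k: "k = i + m" by (metis le_add_diff_inverse)
        have m: "i + m - i = m" by simp
        show ?thesis unfolding k m power_add power_minus[of Q m]
          by (simp only: mult_ac)
      next
        case False then show ?thesis by (simp add: binomial_eq_0)
      qed
    qed
    then show ?thesis using z by simp
  qed
  have S0: "(\<Sum>k\<le>n. D k * Q ^ k * (-1) ^ k * pp Q t k) = 0"
  proof -
    have "(\<Sum>k\<le>n. D k * Q ^ k * (-1) ^ k * pp Q t k) =
        (\<Sum>i<t. (Q ^ t * (-1) ^ i - (- Q) ^ i) * (\<Sum>k\<le>n. D k * Q ^ k * (-1) ^ k * real (k choose i)))"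
      unfolding pp_def sum_distrib_left
      by (subst sum.swap) (intro sum.cong refl, simp only: mult_ac)
    also have "\<dots> = 0" using Z by simp
    finally show ?thesis .
  qed
  have S1: "(\<Sum>k\<le>n. D k * Q ^ k * Fv Q t k) = (Q * (Q - 1)) ^ n * N"
  proof -
    have "(\<Sum>k\<le>n. D k * Q ^ k * Fv Q t k) =
        (\<Sum>k\<le>n. D k * (Q * (Q - 1)) ^ k) + (\<Sum>k\<le>n. D k * Q ^ k * (-1) ^ k * pp Q t k)"
      unfolding Fv_def sum.distrib[symmetric]
      by (intro sum.cong refl) (unfold power_mult_distrib, simp add: algebra_simps)
    then show ?thesis using S0 DQ by simp
  qed
  have Fnn: "\<And>k. Fv Q t k \<ge> 0" using Fv_nonneg[of t Q] qt t by (simp add: Q_def)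
  have "D 0 * Q ^ 0 * Fv Q t 0 \<le> (\<Sum>k\<le>n. D k * Q ^ k * Fv Q t k)"
    by (rule member_le_sum) (use D(1) Fnn r0 in auto)
  moreover have "Fv Q t 0 = Q ^ t"
    using t Fv_0[of Q "t - 1"] by simp
  ultimately have ineq: "(Q - 1) ^ n * N ^ 2 * Q ^ t \<le> (Q * (Q - 1)) ^ n * N"
    using S1 D0 by simp
  show ?thesis
  proof (cases "card F = 0")
    case True then show ?thesis by simp
  next
    case False
    then have Npos: "N > 0" by (simp add: N_def)
    have rn: "(Q - 1) ^ n > 0" using r0 by simp
    have e: "(Q * (Q - 1)) ^ n = Q ^ n * (Q - 1) ^ n" by (rule power_mult_distrib)
    have "((Q - 1) ^ n * N) * (N * Q ^ t) \<le> ((Q - 1) ^ n * N) * Q ^ n"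
      using ineq unfolding e by (simp add: power2_eq_square algebra_simps)
    then have "N * Q ^ t \<le> Q ^ n"
      using rn Npos by (simp add: mult_le_cancel_left)
    then have "real (card F * q ^ t) \<le> real (q ^ n)" by (simp add: N_def Q_def)
    then show ?thesis by linarith
  qed
qed



lemma hdist_agr: "hdist n x y + agr n x y = n"
proof -
  have "{i. i < n \<and> x i \<noteq> y i} \<union> {i. i < n \<and> x i = y i} = {..<n}" by auto
  moreover have "{i. i < n \<and> x i \<noteq> y i} \<inter> {i. i < n \<and> x i = y i} = {}" by auto
  ultimately show ?thesis unfolding hdist_def agr_def
    by (metis (no_types, lifting) card_Un_disjoint card_lessThan finite_Un finite_lessThan)
qed

definition code :: "nat \<Rightarrow> nat \<Rightarrow> (nat \<Rightarrow> nat) \<Rightarrow> nat" where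
  "code q t x = (\<Sum>i<t. x i * q ^ i)"

lemma words_lt: "x \<in> words q n \<Longrightarrow> q \<ge> 1 \<Longrightarrow> x i < q"
  by (cases "i < n") (auto simp: words_def)

lemma code_lt:
  assumes "\<And>i. x i < q"
  shows "code q t x < q ^ t"
proof (induction t)
  case 0 then show ?case by (simp add: code_def)
next
  case (Suc t)
  have "x t \<le> q - 1" using assms[of t] by simp
  then have "x t * q ^ t \<le> (q - 1) * q ^ t" by simp
  moreover have "code q (Suc t) x = code q t x + x t * q ^ t" by (simp add: code_def)
  moreover have "(q - 1) * q ^ t + q ^ t = q ^ Suc t"
    using assms[of t] by (cases q) auto
  ultimately show ?case using Suc by linarith
qed

lemma code_inj:
  assumes "\<And>i. x i < q" "\<And>i. y i < q" "code q t x = code q t y"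
  shows "\<forall>i<t. x i = y i"
  using assms(3)
proof (induction t)
  case 0 then show ?case by simp
next
  case (Suc t)
  have qp: "q ^ t > 0" using assms(1)[of 0] by simp
  have cx: "code q (Suc t) x = code q t x + x t * q ^ t"
    and cy: "code q (Suc t) y = code q t y + y t * q ^ t" by (simp_all add: code_def)
  have lx: "code q t x < q ^ t" and ly: "code q t y < q ^ t"
    using code_lt assms by blast+
  have dx: "code q (Suc t) x div q ^ t = x t" and mx: "code q (Suc t) x mod q ^ t = code q t x"
    unfolding cx using lx qp by simp_all
  have dy: "code q (Suc t) y div q ^ t = y t" and my: "code q (Suc t) y mod q ^ t = code q t y"
    unfolding cy using ly qp by simp_all
  have "x t = y t" using dx dy Suc.prems by simp
  moreover have "\<forall>i<t. x i = y i" using Suc.IH mx my Suc.prems by simp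
  ultimately show ?case using less_Suc_eq by auto
qed

lemma code_coloring:
  assumes q: "q \<ge> 1" and d: "d \<ge> 1" "d \<le> n"
  shows "proper_coloring (words q n) (H_adj q n d) (q ^ (n - d + 1)) (code q (n - d + 1))"
  unfolding proper_coloring_def
proof (intro conjI ballI impI)
  fix v assume "v \<in> words q n"
  then show "code q (n - d + 1) v < q ^ (n - d + 1)" using code_lt words_lt q by blast
next
  fix u v assume u: "u \<in> words q n" and v: "v \<in> words q n" and adj: "H_adj q n d u v"
  show "code q (n - d + 1) u \<noteq> code q (n - d + 1) v"
  proof
    assume "code q (n - d + 1) u = code q (n - d + 1) v"
    then have eq: "\<forall>i<n - d + 1. u i = v i" using code_inj words_lt q u v by blast
    have "{..<n - d + 1} \<subseteq> {i. i < n \<and> u i = v i}" using eq d by auto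
    moreover have "finite {i. i < n \<and> u i = v i}" by simp
    ultimately have "card {..<n - d + 1} \<le> agr n u v" unfolding agr_def
      by (rule card_mono[rotated])
    then have "n - d + 1 \<le> agr n u v" by simp
    then have "hdist n u v < d" using hdist_agr[of n u v] d by linarith
    then show False using adj by (simp add: H_adj_def)
  qed
qed

lemma card_classes:
  assumes "proper_coloring W adj K c" "finite W"
  shows "card W = (\<Sum>j<K. card {w\<in>W. c w = j})"
proof -
  have "W = (\<Union>j<K. {w\<in>W. c w = j})"
    using assms(1) unfolding proper_coloring_def by auto
  moreover have "card (\<Union>j<K. {w\<in>W. c w = j}) = (\<Sum>j<K. card {w\<in>W. c w = j})"
    by (rule card_UN_disjoint) (use assms(2) in auto)
  ultimately show ?thesis by simp
qed

lemma class_hdist: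
  assumes "proper_coloring (words q n) (H_adj q n d) K c"
    "x \<in> words q n" "y \<in> words q n" "c x = c y" "x \<noteq> y"
  shows "hdist n x y < d"
  using assms unfolding proper_coloring_def H_adj_def by force

lemma class_agr:
  assumes "proper_coloring (words q n) (H_adj q n d) K c" "d \<ge> 1" "d \<le> n"
    "x \<in> words q n" "y \<in> words q n" "c x = c y"
  shows "agr n x y \<ge> n - d + 1"
proof (cases "x = y")
  case True then show ?thesis using agr_eq_n[OF assms(4) assms(4)] assms(2,3) by simp
next
  case False
  then have "hdist n x y < d" using class_hdist assms by blast
  then show ?thesis using hdist_agr[of n x y] assms(2,3) by linarith
qed

lemma binary_bound:
  assumes S: "S \<subseteq> words 2 n" and h: "\<forall>x\<in>S. \<forall>y\<in>S. x \<noteq> y \<longrightarrow> hdist n x y < 2"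
  shows "card S \<le> 2"
proof (cases "S = {}")
  case True then show ?thesis by simp
next
  case False
  then obtain x where x: "x \<in> S" by blast
  have finS: "finite S" using S finite_words finite_subset by blast
  have single: "\<exists>i. i < n \<and> {j. j < n \<and> x j \<noteq> y j} = {i}" if y: "y \<in> S" "y \<noteq> x" for y
  proof -
    have xw: "x \<in> words 2 n" and yw: "y \<in> words 2 n" using x y S by auto
    have "\<exists>j<n. x j \<noteq> y j"
    proof (rule ccontr)
      assume nj: "\<not> (\<exists>j<n. x j \<noteq> y j)"
      have "x = y"
      proof
        fix j show "x j = y j"
        proof (cases "j < n")
          case True then show ?thesis using nj by blast
        next
          case False then show ?thesis using xw yw by (simp add: words_def)
        qed
      qed
      then show False using y by simp
    qed
    then have ne: "{j. j < n \<and> x j \<noteq> y j} \<noteq> {}" by blast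
    have fin: "finite {j. j < n \<and> x j \<noteq> y j}" by simp
    have c0: "card {j. j < n \<and> x j \<noteq> y j} \<noteq> 0" using card_0_eq[OF fin] ne by simp
    have xy: "x \<noteq> y" using y(2) by auto
    have "hdist n x y < 2" by (rule h[rule_format, OF x y(1) xy])
    then have c1: "card {j. j < n \<and> x j \<noteq> y j} \<le> 1" unfolding hdist_def by simp
    from c0 c1 have "card {j. j < n \<and> x j \<noteq> y j} = 1" by linarith
    then obtain i where "{j. j < n \<and> x j \<noteq> y j} = {i}" by (rule card_1_singletonE)
    then show ?thesis by auto
  qed
  have "\<forall>y\<in>S - {x}. \<forall>z\<in>S - {x}. y = z"
  proof (intro ballI)
    fix y z assume y: "y \<in> S - {x}" and z: "z \<in> S - {x}"
    obtain i where i: "i < n" "{j. j < n \<and> x j \<noteq> y j} = {i}" using single y by blast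
    obtain k where k: "k < n" "{j. j < n \<and> x j \<noteq> z j} = {k}" using single z by blast
    have yw: "y \<in> words 2 n" and zw: "z \<in> words 2 n" and xw: "x \<in> words 2 n"
      using y z x S by auto
    show "y = z"
    proof (cases "i = k")
      case True
      show ?thesis
      proof
        fix m
        show "y m = z m"
        proof (cases "m < n")
          case False then show ?thesis using yw zw by (simp add: words_def)
        next
          case True
          show ?thesis
          proof (cases "m = i")
            case True
            have "x m \<noteq> y m" "x m \<noteq> z m" using i k \<open>m = i\<close> \<open>i = k\<close> by auto
            moreover have "x m < 2" "y m < 2" "z m < 2" using xw yw zw \<open>m < n\<close> by (auto simp: words_def)
            ultimately show ?thesis by linarith
          next
            case False
            have "x m = y m" using i \<open>m < n\<close> False by auto
            moreover have "x m = z m" using k \<open>m < n\<close> False \<open>i = k\<close> by auto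
            ultimately show ?thesis by simp
          qed
        qed
      qed
    next
      case False
      have yi: "x i \<noteq> y i" using i by blast
      have zi: "x i = z i"
      proof (rule ccontr)
        assume "x i \<noteq> z i"
        then have "i \<in> {j. j < n \<and> x j \<noteq> z j}" using i(1) by blast
        then have "i = k" unfolding k(2) by simp
        then show False using False by simp
      qed
      have zk: "x k \<noteq> z k" using k by blast
      have yk: "x k = y k"
      proof (rule ccontr)
        assume "x k \<noteq> y k"
        then have "k \<in> {j. j < n \<and> x j \<noteq> y j}" using k(1) by blast
        then have "k = i" unfolding i(2) by simp
        then show False using False by simp
      qed
      have "y i \<noteq> z i" using yi zi by simp
      moreover have "y k \<noteq> z k" using zk yk by simp
      ultimately have sub: "{i, k} \<subseteq> {j. j < n \<and> y j \<noteq> z j}" using i(1) k(1) by blast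
      have "card {i, k} \<le> hdist n y z" unfolding hdist_def by (rule card_mono[OF _ sub]) simp
      then have ge: "hdist n y z \<ge> 2" using False by simp
      have yz: "y \<noteq> z" using \<open>y i \<noteq> z i\<close> by blast
      have "hdist n y z < 2" by (rule h[rule_format]) (use y z yz in blast)+
      then show ?thesis using ge by simp
    qed
  qed
  then have "card (S - {x}) \<le> 1" using finS by (simp add: card_le_Suc0_iff_eq)
  then show ?thesis using finS x by (simp add: card_Diff_singleton)
qed

lemma all_eq_from_sum:
  fixes f :: "nat \<Rightarrow> nat"
  assumes "\<forall>j<K. f j \<le> M" "(\<Sum>j<K. f j) = K * M"
  shows "\<forall>j<K. f j = M"
proof -
  have "(\<Sum>j<K. M - f j) = (\<Sum>j<K. M) - (\<Sum>j<K. f j)"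
    using assms(1) by (intro sum_subtractf_nat) auto
  also have "\<dots> = 0" using assms(2) by simp
  finally have z: "\<forall>j\<in>{..<K}. M - f j = 0" by simp
  show ?thesis
  proof (intro allI impI)
    fix j assume j: "j < K"
    then have "M - f j = 0" using z by simp
    moreover have "f j \<le> M" using assms(1) j by simp
    ultimately show "f j = M" by simp
  qed
qed

theorem corollary3p5:
  shows "(\<forall>n::nat. n \<ge> 2 \<longrightarrow>
            chromatic_number (words 2 n) (H_adj 2 n 2) = 2 ^ (n - 1)) \<and>
         (\<forall>q n d :: nat. q \<ge> 3 \<longrightarrow> n \<ge> 2 \<longrightarrow> d > 0 \<longrightarrow>
            int d \<ge> int n - int q + 2 \<longrightarrow> d \<le> n \<longrightarrow>
            chromatic_number (words q n) (H_adj q n d) = q ^ (n - d + 1) \<and>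
            (\<forall>c. proper_coloring (words q n) (H_adj q n d) (q ^ (n - d + 1)) c \<longrightarrow>
                 even_coloring (words q n) c))"
proof (intro conjI allI impI)
  fix n :: nat assume n: "n \<ge> 2"
  have e: "n - 2 + 1 = n - 1" using n by simp
  have col: "proper_coloring (words 2 n) (H_adj 2 n 2) (2 ^ (n - 1)) (code 2 (n - 1))"
    by (rule code_coloring[of 2 2 n, unfolded e]) (use n in auto)
  show "chromatic_number (words 2 n) (H_adj 2 n 2) = 2 ^ (n - 1)"
    unfolding chromatic_number_def
  proof (rule Least_equality)
    show "\<exists>c. proper_coloring (words 2 n) (H_adj 2 n 2) (2 ^ (n - 1)) c" using col by blast
  next
    fix k assume "\<exists>c. proper_coloring (words 2 n) (H_adj 2 n 2) k c"
    then obtain c where c: "proper_coloring (words 2 n) (H_adj 2 n 2) k c" by blast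
    have "\<forall>j<k. card {w\<in>words 2 n. c w = j} \<le> 2"
    proof (intro allI impI)
      fix j assume "j < k"
      show "card {w\<in>words 2 n. c w = j} \<le> 2"
      proof (rule binary_bound)
        show "{w\<in>words 2 n. c w = j} \<subseteq> words 2 n" by blast
        show "\<forall>x\<in>{w\<in>words 2 n. c w = j}. \<forall>y\<in>{w\<in>words 2 n. c w = j}. x \<noteq> y \<longrightarrow> hdist n x y < 2"
        proof (intro ballI impI)
          fix x y assume "x \<in> {w\<in>words 2 n. c w = j}" "y \<in> {w\<in>words 2 n. c w = j}" "x \<noteq> y"
          then show "hdist n x y < 2" using class_hdist[OF c, of x y] by simp
        qed
      qed
    qed
    then have "(\<Sum>j<k. card {w\<in>words 2 n. c w = j}) \<le> k * 2"
      using sum_bounded_above[of "{..<k}" "\<lambda>j. card {w\<in>words 2 n. c w = j}" 2] by simp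
    then have "2 ^ n \<le> k * 2" using card_classes[OF c finite_words] card_words by simp
    moreover have "(2::nat) ^ n = 2 ^ (n - 1) * 2"
    proof -
      have "n = Suc (n - 1)" using n by simp
      then show ?thesis by (metis power_Suc2)
    qed
    ultimately show "2 ^ (n - 1) \<le> k" by simp
  qed
next
  fix q n d :: nat
  assume q: "q \<ge> 3" and n: "n \<ge> 2" and d0: "d > 0" and dq: "int d \<ge> int n - int q + 2" and dn: "d \<le> n"
  define t where "t = n - d + 1"
  have t1: "t \<ge> 1" and tn: "t \<le> n" and qt: "q \<ge> t + 1" using d0 dn dq by (auto simp: t_def)
  have qpow: "q ^ n = q ^ t * q ^ (n - t)" using tn by (simp add: power_add[symmetric])
  have qpos: "q ^ t > 0" "q ^ (n - t) > 0" using q by simp_all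
  have classbound: "card {w\<in>words q n. c w = j} \<le> q ^ (n - t)"
    if c: "proper_coloring (words q n) (H_adj q n d) k c" for c k j
  proof -
    have "card {w\<in>words q n. c w = j} * q ^ t \<le> q ^ n"
    proof (rule ekr[OF qt t1])
      show "{w\<in>words q n. c w = j} \<subseteq> words q n" by auto
      show "\<forall>x\<in>{w\<in>words q n. c w = j}. \<forall>y\<in>{w\<in>words q n. c w = j}. t \<le> agr n x y"
      proof (intro ballI)
        fix x y assume "x \<in> {w\<in>words q n. c w = j}" "y \<in> {w\<in>words q n. c w = j}"
        then have xw: "x \<in> words q n" "c x = j" and yw: "y \<in> words q n" "c y = j" by auto
        have d1: "d \<ge> 1" using d0 by simp
        have "agr n x y \<ge> n - d + 1" by (rule class_agr[OF c d1 dn xw(1) yw(1)]) (use xw yw in simp)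
        then show "t \<le> agr n x y" unfolding t_def .
      qed
    qed
    moreover have B: "q ^ n = q ^ (n - t) * q ^ t" using qpow by (simp only: mult.commute)
    ultimately have "card {w\<in>words q n. c w = j} * q ^ t \<le> q ^ (n - t) * q ^ t"
      by (simp only:)
    then show ?thesis using mult_le_cancel2 qpos(1) by blast
  qed
  have col: "proper_coloring (words q n) (H_adj q n d) (q ^ t) (code q t)"
    unfolding t_def by (rule code_coloring) (use q d0 dn in auto)
  have lower: "q ^ t \<le> k" if c: "proper_coloring (words q n) (H_adj q n d) k c" for c k
  proof -
    have "(\<Sum>j<k. card {w\<in>words q n. c w = j}) \<le> k * q ^ (n - t)"
      using sum_bounded_above[of "{..<k}" "\<lambda>j. card {w\<in>words q n. c w = j}" "q ^ (n - t)"]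
        classbound[OF c] by simp
    then have "q ^ t * q ^ (n - t) \<le> k * q ^ (n - t)"
      using card_classes[OF c finite_words] card_words qpow by simp
    then show ?thesis using mult_le_cancel2 qpos(2) by blast
  qed
  show "chromatic_number (words q n) (H_adj q n d) = q ^ (n - d + 1)"
    unfolding chromatic_number_def t_def[symmetric]
    by (rule Least_equality) (use col lower in auto)
  {
    fix c assume c': "proper_coloring (words q n) (H_adj q n d) (q ^ (n - d + 1)) c"
    then have c: "proper_coloring (words q n) (H_adj q n d) (q ^ t) c" by (simp add: t_def)
    have sum: "(\<Sum>j<q ^ t. card {w\<in>words q n. c w = j}) = q ^ t * q ^ (n - t)"
      using card_classes[OF c finite_words] card_words qpow by simp
    have bnd: "\<forall>j<q ^ t. card {w\<in>words q n. c w = j} \<le> q ^ (n - t)"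
      using classbound[OF c] by blast
    have all: "\<forall>j<q ^ t. card {w\<in>words q n. c w = j} = q ^ (n - t)"
      by (rule all_eq_from_sum[OF bnd sum])
    have lt: "\<And>u. u \<in> words q n \<Longrightarrow> c u < q ^ t" using c unfolding proper_coloring_def by blast
    show "even_coloring (words q n) c"
      unfolding even_coloring_def
    proof (intro ballI)
      fix u v assume u: "u \<in> words q n" and v: "v \<in> words q n"
      have "card {w\<in>words q n. c w = c u} = q ^ (n - t)" using all lt[OF u] by blast
      moreover have "card {w\<in>words q n. c w = c v} = q ^ (n - t)" using all lt[OF v] by blast
      ultimately show "card {w\<in>words q n. c w = c u} = card {w\<in>words q n. c w = c v}" by simp
    qed
  }
qed

end
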